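(* Let $K$ be a field, $n,\ell\ge1$, $B=\{u_1,\dots,u_\ell\}\subseteq K^n$ with $u_i\ne u_j$ for $i\ne j$, and $\alpha\in K^\ell$. Regard $K[z]=K[z_1,\dots,z_n]$ as a module over itself. Then \[ \sigma(N_{B,\alpha})=\{f\in K[z]: |S_{\alpha_{f,B}}|\le1\},\qquad \tau(N_{B,\alpha})=\{f\in K[z]: \alpha_{f,B}\in\Omega_\ell\}. \]
   Context: For $\beta=(\beta_1,\dots,\beta_\ell)\in K^\ell$, $S_\beta=\{i:\beta_i\ne0\}$, and $\Omega_\ell$ is the set of $\beta\in K^\ell$ such that $\sum_{i\in C}\beta_i\ne0$ for every nonempty $C\subseteq S_\beta$ (so $0\in\Omega_\ell$). For $f\in K[z]$, $\alpha_{f,B}=(\alpha_1f(u_1),\dots,\alpha_\ell f(u_\ell))$. $N_{B,\alpha}=\{f\in K[z]: \sum_{i=1}^\ell\alpha_if(u_i)=0\}$. For a $K$-subspace $N$ of $K[z]$ and $g\in K[z]$, $(N:g)=\{h\in K[z]: hg\in N\}$. A $K$-subspace $J$ of $K[z]$ is a Mathieu subspace if whenever $a^m\in J$ for all $m\ge1$, then for every $b\in K[z]$ we have $ba^m\in J$ for all sufficiently large $m$. $\sigma(N)$ is the set of $g\in K[z]$ with $(N:g)$ an ideal, and $\tau(N)$ the set of $g$ with $(N:g)$ a Mathieu subspace of $K[z]$ (for the commutative algebra $K[z]$ all choices left/right/pre-two-sided/two-sided coincide). *)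

theory Defs
  imports Main "HOL-Library.Poly_Mapping"
begin

text \<open>Multivariate polynomials K[z_1..z_n]: variables indexed by a finite type 'n
  (so n = CARD('n) >= 1), monomials are exponent vectors 'n =>0 nat.\<close>
type_synonym ('n, 'a) mpoly = "('n \<Rightarrow>\<^sub>0 nat) \<Rightarrow>\<^sub>0 'a"

definition mp_eval :: "('n, 'a::comm_semiring_1) mpoly \<Rightarrow> ('n \<Rightarrow> 'a) \<Rightarrow> 'a" where
  "mp_eval f x = (\<Sum>m\<in>Poly_Mapping.keys f. Poly_Mapping.lookup f m * (\<Prod>i\<in>Poly_Mapping.keys (m::'n \<Rightarrow>\<^sub>0 nat). x i ^ Poly_Mapping.lookup m i))"

definition mp_smult :: "'a::comm_semiring_1 \<Rightarrow> ('n, 'a) mpoly \<Rightarrow> ('n, 'a) mpoly" where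
  "mp_smult c f = Poly_Mapping.map (\<lambda>x. c * x) f"

definition K_subspace :: "('n, 'a::comm_ring_1) mpoly set \<Rightarrow> bool" where
  "K_subspace J \<longleftrightarrow> 0 \<in> J \<and> (\<forall>a\<in>J. \<forall>b\<in>J. a + b \<in> J) \<and> (\<forall>c. \<forall>a\<in>J. mp_smult c a \<in> J)"

definition is_ideal :: "('n, 'a::comm_ring_1) mpoly set \<Rightarrow> bool" where
  "is_ideal J \<longleftrightarrow> K_subspace J \<and> (\<forall>a\<in>J. \<forall>b. b * a \<in> J)"

definition mathieu_subspace :: "('n, 'a::comm_ring_1) mpoly set \<Rightarrow> bool" where
  "mathieu_subspace J \<longleftrightarrow> K_subspace J \<and>
     (\<forall>a. (\<forall>m\<ge>1. a ^ m \<in> J) \<longrightarrow> (\<forall>b. \<exists>M. \<forall>m\<ge>M. b * a ^ m \<in> J))"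

definition colon :: "('n, 'a::comm_ring_1) mpoly set \<Rightarrow> ('n, 'a) mpoly \<Rightarrow> ('n, 'a) mpoly set" where
  "colon N g = {h. h * g \<in> N}"

definition sigma_set :: "('n, 'a::comm_ring_1) mpoly set \<Rightarrow> ('n, 'a) mpoly set" where
  "sigma_set N = {g. is_ideal (colon N g)}"

definition tau_set :: "('n, 'a::comm_ring_1) mpoly set \<Rightarrow> ('n, 'a) mpoly set" where
  "tau_set N = {g. mathieu_subspace (colon N g)}"

text \<open>Vectors in K^l are functions nat => 'a, using indices i < l.\<close>
definition supp_vec :: "nat \<Rightarrow> (nat \<Rightarrow> 'a::zero) \<Rightarrow> nat set" where
  "supp_vec l \<beta> = {i. i < l \<and> \<beta> i \<noteq> 0}"

definition Omega :: "nat \<Rightarrow> (nat \<Rightarrow> 'a::comm_ring_1) set" where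
  "Omega l = {\<beta>. \<forall>C. C \<subseteq> supp_vec l \<beta> \<and> C \<noteq> {} \<longrightarrow> sum \<beta> C \<noteq> 0}"

definition alpha_fB :: "nat \<Rightarrow> (nat \<Rightarrow> 'a::comm_ring_1) \<Rightarrow> (nat \<Rightarrow> ('n \<Rightarrow> 'a)) \<Rightarrow> ('n, 'a) mpoly \<Rightarrow> nat \<Rightarrow> 'a" where
  "alpha_fB l \<alpha> u f = (\<lambda>i. if i < l then \<alpha> i * mp_eval f (u i) else 0)"

definition N_Balpha :: "nat \<Rightarrow> (nat \<Rightarrow> 'a::comm_ring_1) \<Rightarrow> (nat \<Rightarrow> ('n \<Rightarrow> 'a)) \<Rightarrow> ('n, 'a) mpoly set" where
  "N_Balpha l \<alpha> u = {f. (\<Sum>i<l. \<alpha> i * mp_eval f (u i)) = 0}"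

end

theory Submission imports Defs begin

definition mon :: "('n::finite \<Rightarrow>\<^sub>0 nat) \<Rightarrow> ('n \<Rightarrow> 'a::comm_semiring_1) \<Rightarrow> 'a" where
  "mon m x = (\<Prod>i\<in>UNIV. x i ^ Poly_Mapping.lookup m i)"

lemma mon_keys: "(\<Prod>i\<in>Poly_Mapping.keys (m::'n::finite \<Rightarrow>\<^sub>0 nat). x i ^ Poly_Mapping.lookup m i) = mon m (x::'n \<Rightarrow> 'a::comm_semiring_1)"
  unfolding mon_def by (rule prod.mono_neutral_left) (auto simp: in_keys_iff)

lemma mp_eval_mon: "mp_eval f x = (\<Sum>m\<in>Poly_Mapping.keys f. Poly_Mapping.lookup f m * mon m x)"
  unfolding mp_eval_def mon_keys ..

lemma mp_eval_sup: "finite A \<Longrightarrow> Poly_Mapping.keys f \<subseteq> A \<Longrightarrow>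
   mp_eval f x = (\<Sum>m\<in>A. Poly_Mapping.lookup f m * mon m x)"
  unfolding mp_eval_mon by (rule sum.mono_neutral_left) (auto simp: in_keys_iff)

lemma mp_eval_add: "mp_eval (f + g) x = mp_eval f x + mp_eval (g::('n::finite,'a::comm_semiring_1) mpoly) x"
proof -
  let ?A = "Poly_Mapping.keys f \<union> Poly_Mapping.keys g"
  have "mp_eval (f + g) x = (\<Sum>m\<in>?A. Poly_Mapping.lookup (f+g) m * mon m x)"
    by (rule mp_eval_sup) (auto dest: subsetD[OF keys_add])
  also have "\<dots> = (\<Sum>m\<in>?A. Poly_Mapping.lookup f m * mon m x) + (\<Sum>m\<in>?A. Poly_Mapping.lookup g m * mon m x)"
    by (simp add: lookup_add sum.distrib distrib_right)
  also have "\<dots> = mp_eval f x + mp_eval g x"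
    using mp_eval_sup[of ?A f x] mp_eval_sup[of ?A g x] by simp
  finally show ?thesis .
qed

lemma mp_eval_zero[simp]: "mp_eval 0 x = 0"
  by (simp add: mp_eval_def)

lemma mp_eval_single: "mp_eval (Poly_Mapping.single m c) x = c * mon m x"
  by (simp add: mp_eval_mon)

lemma mon_add: "mon (a + b) x = mon a x * mon b x"
  by (simp add: mon_def lookup_add power_add prod.distrib)

lemma update_eq: "a \<notin> Poly_Mapping.keys f \<Longrightarrow> Poly_Mapping.update a b f = f + Poly_Mapping.single a b"
  by (rule poly_mapping_eqI) (auto simp: lookup_update lookup_add lookup_single in_keys_iff when_def)

lemma mp_eval_single_mult: "mp_eval (Poly_Mapping.single a b * g) x = b * mon a x * mp_eval (g::('n::finite,'a::comm_semiring_1) mpoly) x"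
proof (induction g rule: update_induct)
  case const then show ?case by simp
next
  case (update f c d)
  then show ?case
    by (simp add: update_eq distrib_left mult_single mp_eval_add mp_eval_single mon_add algebra_simps)
qed

lemma mp_eval_mult: "mp_eval (f * g) x = mp_eval f x * mp_eval (g::('n::finite,'a::comm_semiring_1) mpoly) x"
proof (induction f rule: update_induct)
  case const then show ?case by simp
next
  case (update f c d)
  then show ?case
    by (simp add: update_eq distrib_right mp_eval_single_mult[of c d g] mp_eval_add mp_eval_single distrib_right)
qed

lemma mp_eval_const: "mp_eval (Poly_Mapping.single 0 c) (x::'n::finite \<Rightarrow> 'a::comm_semiring_1) = c"
  unfolding mp_eval_single mon_def by simp

lemma mp_eval_var: "mp_eval (Poly_Mapping.single (Poly_Mapping.single k 1) 1) (x::'n::finite \<Rightarrow> 'a::comm_semiring_1) = x k"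
proof -
  have "(\<Prod>i\<in>UNIV. x i ^ Poly_Mapping.lookup (Poly_Mapping.single k (1::nat)) i) = (\<Prod>i\<in>{k}. x i)"
    by (rule prod.mono_neutral_cong_right) (auto simp: lookup_single when_def)
  then show ?thesis by (simp add: mp_eval_single mon_def)
qed

lemma mp_eval_one: "mp_eval 1 (x::'n::finite \<Rightarrow> 'a::comm_semiring_1) = 1"
  using mp_eval_const[of 1 x] by (simp add: single_one)

lemma mp_eval_smult: "mp_eval (mp_smult c f) (x::'n::finite \<Rightarrow> 'a::comm_semiring_1) = c * mp_eval f x"
proof -
  have "mp_smult c f = Poly_Mapping.single 0 c * f"
    unfolding mp_smult_def by (rule mult_map_scale_conv_mult)
  then show ?thesis by (simp add: mp_eval_mult mp_eval_const)
qed

lemma mp_eval_power: "mp_eval (f ^ m) (x::'n::finite \<Rightarrow> 'a::comm_semiring_1) = mp_eval f x ^ m"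
  by (induction m) (simp_all add: mp_eval_one mp_eval_mult)

lemma mp_eval_prod: "mp_eval (\<Prod>i\<in>I. f i) (x::'n::finite \<Rightarrow> 'a::comm_semiring_1) = (\<Prod>i\<in>I. mp_eval (f i) x)"
  by (induction I rule: infinite_finite_induct) (simp_all add: mp_eval_one mp_eval_mult)

lemma mp_eval_sum: "mp_eval (\<Sum>i\<in>I. f i) (x::'n::finite \<Rightarrow> 'a::comm_semiring_1) = (\<Sum>i\<in>I. mp_eval (f i) x)"
  by (induction I rule: infinite_finite_induct) (simp_all add: mp_eval_add)


lemma delta_poly:
  fixes u :: "nat \<Rightarrow> ('n::finite \<Rightarrow> 'a::field)"
  assumes inj: "inj_on u {..<l}" and j: "j < l"
  shows "\<exists>p. \<forall>t<l. mp_eval p (u t) = (if t = j then 1 else 0)"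
proof -
  define kk where "kk i = (SOME k. u j k \<noteq> u i k)" for i
  have kk: "u j (kk i) \<noteq> u i (kk i)" if "i < l" "i \<noteq> j" for i
  proof -
    have "u j \<noteq> u i" using inj j that by (auto dest: inj_onD)
    then have "\<exists>k. u j k \<noteq> u i k" by auto
    then show ?thesis unfolding kk_def by (rule someI_ex)
  qed
  define q where "q i = Poly_Mapping.single 0 (inverse (u j (kk i) - u i (kk i))) *
      (Poly_Mapping.single (Poly_Mapping.single (kk i) (1::nat)) 1 + Poly_Mapping.single 0 (- u i (kk i)))" for i
  have qe: "mp_eval (q i) y = (y (kk i) - u i (kk i)) / (u j (kk i) - u i (kk i))" for i y
    unfolding q_def by (simp add: mp_eval_mult mp_eval_add mp_eval_const mp_eval_var mp_eval_var[unfolded One_nat_def] divide_inverse algebra_simps)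
  define p where "p = (\<Prod>i\<in>{..<l}-{j}. q i)"
  have "\<forall>t<l. mp_eval p (u t) = (if t = j then 1 else 0)"
  proof (intro allI impI)
    fix t assume t: "t < l"
    show "mp_eval p (u t) = (if t = j then 1 else 0)"
    proof (cases "t = j")
      case True
      have "mp_eval p (u t) = (\<Prod>i\<in>{..<l}-{j}. 1)"
        unfolding p_def mp_eval_prod
        by (rule prod.cong) (use kk True in \<open>auto simp: qe\<close>)
      then show ?thesis using True by simp
    next
      case False
      have "mp_eval p (u t) = (\<Prod>i\<in>{..<l}-{j}. mp_eval (q i) (u t))"
        unfolding p_def mp_eval_prod ..
      also have "\<dots> = 0"
        by (rule prod_zero) (use t False in \<open>auto simp: qe intro!: bexI[of _ t]\<close>)
      finally show ?thesis using False by simp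
    qed
  qed
  then show ?thesis by blast
qed

lemma interp_poly:
  fixes u :: "nat \<Rightarrow> ('n::finite \<Rightarrow> 'a::field)"
  assumes inj: "inj_on u {..<l}"
  shows "\<exists>p. \<forall>t<l. mp_eval p (u t) = v t"
proof -
  have "\<forall>j. \<exists>p. j < l \<longrightarrow> (\<forall>t<l. mp_eval p (u t) = (if t = j then 1 else 0))"
    using delta_poly[OF inj] by blast
  then obtain d where d: "\<And>j t. j < l \<Longrightarrow> t < l \<Longrightarrow> mp_eval (d j) (u t) = (if t = j then 1 else 0)"
    by metis
  define p where "p = (\<Sum>j<l. Poly_Mapping.single 0 (v j) * d j)"
  have "mp_eval p (u t) = v t" if t: "t < l" for t
  proof -
    have "mp_eval p (u t) = (\<Sum>j<l. v j * (if t = j then 1 else 0))"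
      unfolding p_def mp_eval_sum
      by (rule sum.cong) (use d t in \<open>auto simp: mp_eval_mult mp_eval_const\<close>)
    also have "\<dots> = v t" using t by (simp add: if_distrib cong: if_cong)
    finally show ?thesis .
  qed
  then show ?thesis by blast
qed


lemma vander:
  fixes s :: "'a::field \<Rightarrow> 'a"
  assumes "finite V" "0 \<notin> V" "\<forall>m\<ge>1. (\<Sum>c\<in>V. s c * c ^ m) = 0"
  shows "\<forall>c\<in>V. s c = 0"
  using assms
proof (induction V arbitrary: s rule: finite_induct)
  case empty then show ?case by simp
next
  case (insert x V)
  define s' where "s' c = s c * (c - x)" for c
  have "\<forall>m\<ge>1. (\<Sum>c\<in>V. s' c * c ^ m) = 0"
  proof (intro allI impI)
    fix m :: nat assume m: "m \<ge> 1"
    have "1 \<le> Suc m" by simp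
    then have e1: "(\<Sum>c\<in>insert x V. s c * c ^ Suc m) = 0" using insert.prems(2) by blast
    have e2: "(\<Sum>c\<in>insert x V. s c * c ^ m) = 0" using insert.prems(2) m by blast
    have "(\<Sum>c\<in>V. s' c * c ^ m) = (\<Sum>c\<in>insert x V. s c * c ^ Suc m) - x * (\<Sum>c\<in>insert x V. s c * c ^ m)"
      using insert.hyps by (simp add: s'_def sum_distrib_left sum_subtractf[symmetric] algebra_simps)
    then show "(\<Sum>c\<in>V. s' c * c ^ m) = 0" using e1 e2 by simp
  qed
  then have "\<forall>c\<in>V. s' c = 0" using insert by auto
  then have V0: "\<forall>c\<in>V. s c = 0" using insert.hyps by (auto simp: s'_def)
  have "(\<Sum>c\<in>insert x V. s c * c ^ 1) = 0" using insert.prems by blast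
  then have "s x * x = 0" using insert.hyps V0 by simp
  then have "s x = 0" using insert.prems by simp
  then show ?case using V0 by simp
qed

definition JJ :: "nat \<Rightarrow> (nat \<Rightarrow> 'a::field) \<Rightarrow> (nat \<Rightarrow> ('n::finite \<Rightarrow> 'a)) \<Rightarrow> ('n, 'a) mpoly set" where
  "JJ l \<beta> u = {h. (\<Sum>i<l. \<beta> i * mp_eval h (u i)) = 0}"

lemma JJ_subspace: "K_subspace (JJ l \<beta> u)"
  unfolding K_subspace_def JJ_def
proof (intro conjI ballI allI)
  fix c a assume "a \<in> {h. (\<Sum>i<l. \<beta> i * mp_eval h (u i)) = 0}"
  moreover have "(\<Sum>i<l. \<beta> i * mp_eval (mp_smult c a) (u i)) = c * (\<Sum>i<l. \<beta> i * mp_eval a (u i))"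
    by (simp add: mp_eval_smult sum_distrib_left algebra_simps)
  ultimately show "mp_smult c a \<in> {h. (\<Sum>i<l. \<beta> i * mp_eval h (u i)) = 0}" by simp
qed (auto simp: mp_eval_add distrib_left sum.distrib)

lemma supp_finite: "finite (supp_vec l \<beta>)" "supp_vec l \<beta> \<subseteq> {..<l}"
  unfolding supp_vec_def by auto

lemma sum_supp: "(\<Sum>i<l. (\<beta>::nat\<Rightarrow>'a::comm_ring_1) i * y i) = (\<Sum>i\<in>supp_vec l \<beta>. \<beta> i * y i)"
  by (rule sum.mono_neutral_right) (auto simp: supp_vec_def)

lemma JJ_ideal:
  fixes u :: "nat \<Rightarrow> ('n::finite \<Rightarrow> 'a::field)"
  assumes inj: "inj_on u {..<l}"
  shows "is_ideal (JJ l \<beta> u) \<longleftrightarrow> card (supp_vec l \<beta>) \<le> 1"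
proof
  assume c: "card (supp_vec l \<beta>) \<le> 1"
  let ?S = "supp_vec l \<beta>"
  have one: "\<And>a b. a \<in> ?S \<Longrightarrow> b \<in> ?S \<Longrightarrow> a = b"
    using c card_le_Suc0_iff_eq[OF supp_finite(1)[of l \<beta>]] by auto
  show "is_ideal (JJ l \<beta> u)"
    unfolding is_ideal_def
  proof (intro conjI JJ_subspace ballI allI)
    fix a b assume a: "a \<in> JJ l \<beta> u"
    have t: "\<beta> i * mp_eval a (u i) = 0" if i: "i \<in> ?S" for i
    proof -
      have "?S = {i}" using one i by blast
      then show ?thesis using a sum_supp[where l=l and \<beta>=\<beta> and y="\<lambda>i. mp_eval a (u i)"] by (simp add: JJ_def)
    qed
    have "(\<Sum>i\<in>?S. \<beta> i * mp_eval (b * a) (u i)) = 0"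
    proof (rule sum.neutral, rule ballI)
      fix i assume "i \<in> ?S"
      then have "\<beta> i * mp_eval a (u i) = 0" by (rule t)
      then show "\<beta> i * mp_eval (b * a) (u i) = 0"
        unfolding mp_eval_mult by (metis mult.left_commute mult_zero_right)
    qed
    then show "b * a \<in> JJ l \<beta> u" by (simp add: JJ_def sum_supp[where l=l and \<beta>=\<beta>])
  qed
next
  assume I: "is_ideal (JJ l \<beta> u)"
  show "card (supp_vec l \<beta>) \<le> 1"
  proof (rule ccontr)
    assume "\<not> ?thesis"
    then obtain j k where jk: "j \<in> supp_vec l \<beta>" "k \<in> supp_vec l \<beta>" "j \<noteq> k"
      using card_le_Suc0_iff_eq[OF supp_finite(1)[of l \<beta>]] by auto
    then have jl: "j < l" "k < l" "\<beta> j \<noteq> 0" "\<beta> k \<noteq> 0" by (auto simp: supp_vec_def)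
    obtain h where h: "\<forall>t<l. mp_eval h (u t) = (if t = j then \<beta> k else 0) + (if t = k then - \<beta> j else 0)"
      using interp_poly[OF inj, of "\<lambda>t. (if t = j then \<beta> k else 0) + (if t = k then - \<beta> j else 0)"] by blast
    obtain b where b: "\<forall>t<l. mp_eval b (u t) = (if t = j then 1 else 0)"
      using interp_poly[OF inj, of "\<lambda>t. if t = j then 1 else 0"] by blast
    have "(\<Sum>i<l. \<beta> i * mp_eval h (u i)) = (\<Sum>i<l. (if i = j then \<beta> j * \<beta> k else 0) + (if i = k then - (\<beta> k * \<beta> j) else 0))"
      by (rule sum.cong) (use h jk(3) in auto)
    also have "\<dots> = 0" using jl by (simp only: sum.distrib sum.delta' lessThan_iff if_True) simp
    finally have "h \<in> JJ l \<beta> u" by (simp add: JJ_def)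
    then have "b * h \<in> JJ l \<beta> u" using I by (simp add: is_ideal_def)
    moreover have "(\<Sum>i<l. \<beta> i * mp_eval (b * h) (u i)) = (\<Sum>i<l. if i = j then \<beta> j * \<beta> k else 0)"
      by (rule sum.cong) (use h b jk in \<open>auto simp: mp_eval_mult\<close>)
    moreover have "\<dots> \<noteq> 0" using jl by simp
    ultimately show False by (simp add: JJ_def)
  qed
qed


lemma key_zero:
  fixes \<beta> :: "nat \<Rightarrow> 'a::field"
  assumes om: "\<beta> \<in> Omega l" and p: "\<forall>m\<ge>1. (\<Sum>i<l. \<beta> i * y i ^ m) = 0"
  shows "\<forall>i\<in>supp_vec l \<beta>. y i = 0"
proof -
  let ?S = "supp_vec l \<beta>"
  define V where "V = y ` ?S - {0}"
  define s where "s c = (\<Sum>i\<in>{i\<in>?S. y i = c}. \<beta> i)" for c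
  have fS: "finite ?S" by (rule supp_finite)
  have "\<forall>m\<ge>1. (\<Sum>c\<in>V. s c * c ^ m) = 0"
  proof (intro allI impI)
    fix m :: nat assume m: "m \<ge> 1"
    have "0 = (\<Sum>i\<in>?S. \<beta> i * y i ^ m)" using p m sum_supp[where l=l and \<beta>=\<beta> and y="\<lambda>i. y i ^ m"] by simp
    also have "\<dots> = (\<Sum>c\<in>y ` ?S. \<Sum>i\<in>{i\<in>?S. y i = c}. \<beta> i * y i ^ m)"
      using fS by (rule sum.image_gen)
    also have "\<dots> = (\<Sum>c\<in>y ` ?S. s c * c ^ m)"
      unfolding s_def sum_distrib_right by (rule sum.cong) auto
    also have "\<dots> = (\<Sum>c\<in>V. s c * c ^ m)"
      unfolding V_def using fS m by (intro sum.mono_neutral_right) auto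
    finally show "(\<Sum>c\<in>V. s c * c ^ m) = 0" by simp
  qed
  then have s0: "\<forall>c\<in>V. s c = 0" by (intro vander) (auto simp: V_def fS)
  show ?thesis
  proof (rule ballI, rule ccontr)
    fix i assume i: "i \<in> ?S" and ne: "y i \<noteq> 0"
    then have "y i \<in> V" by (auto simp: V_def)
    then have "s (y i) = 0" using s0 by blast
    moreover have "{i'\<in>?S. y i' = y i} \<subseteq> ?S" "{i'\<in>?S. y i' = y i} \<noteq> {}" using i by auto
    ultimately show False using om unfolding Omega_def s_def by blast
  qed
qed

lemma JJ_mathieu:
  fixes u :: "nat \<Rightarrow> ('n::finite \<Rightarrow> 'a::field)"
  assumes inj: "inj_on u {..<l}"
  shows "mathieu_subspace (JJ l \<beta> u) \<longleftrightarrow> \<beta> \<in> Omega l"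
proof
  assume om: "\<beta> \<in> Omega l"
  show "mathieu_subspace (JJ l \<beta> u)"
    unfolding mathieu_subspace_def
  proof (intro conjI JJ_subspace allI impI)
    fix a b assume am: "\<forall>m\<ge>1. a ^ m \<in> JJ l \<beta> u"
    then have "\<forall>m\<ge>1. (\<Sum>i<l. \<beta> i * mp_eval a (u i) ^ m) = 0"
      by (simp add: JJ_def mp_eval_power)
    from key_zero[OF om this] have z: "\<forall>i\<in>supp_vec l \<beta>. mp_eval a (u i) = 0" .
    have "\<forall>m\<ge>1. b * a ^ m \<in> JJ l \<beta> u"
    proof (intro allI impI)
      fix m :: nat assume m: "m \<ge> 1"
      have "(\<Sum>i<l. \<beta> i * mp_eval (b * a ^ m) (u i)) = 0"
      proof (rule sum.neutral, rule ballI)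
        fix i assume i: "i \<in> {..<l}"
        show "\<beta> i * mp_eval (b * a ^ m) (u i) = 0"
        proof (cases "\<beta> i = 0")
          case False
          then have "mp_eval a (u i) = 0" using z i by (auto simp: supp_vec_def)
          then show ?thesis using m by (simp add: mp_eval_mult mp_eval_power)
        qed simp
      qed
      then show "b * a ^ m \<in> JJ l \<beta> u" by (simp add: JJ_def)
    qed
    then show "\<exists>M. \<forall>m\<ge>M. b * a ^ m \<in> JJ l \<beta> u" by blast
  qed
next
  assume M: "mathieu_subspace (JJ l \<beta> u)"
  show "\<beta> \<in> Omega l"
  proof (rule ccontr)
    assume "\<beta> \<notin> Omega l"
    then obtain C where C: "C \<subseteq> supp_vec l \<beta>" "C \<noteq> {}" "sum \<beta> C = 0"
      unfolding Omega_def by blast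
    then have Cl: "C \<subseteq> {..<l}" using supp_finite(2) by blast
    obtain j where j: "j \<in> C" using C by blast
    then have jl: "j < l" "\<beta> j \<noteq> 0" using C(1) by (auto simp: supp_vec_def)
    obtain a where a: "\<forall>t<l. mp_eval a (u t) = (if t \<in> C then 1 else 0)"
      using interp_poly[OF inj, of "\<lambda>t. if t \<in> C then 1 else 0"] by blast
    obtain b where b: "\<forall>t<l. mp_eval b (u t) = (if t = j then 1 else 0)"
      using interp_poly[OF inj, of "\<lambda>t. if t = j then 1 else 0"] by blast
    have "\<forall>m\<ge>1. a ^ m \<in> JJ l \<beta> u"
    proof (intro allI impI)
      fix m :: nat assume m: "m \<ge> 1"
      have "(\<Sum>i<l. \<beta> i * mp_eval (a ^ m) (u i)) = (\<Sum>i<l. if i \<in> C then \<beta> i else 0)"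
        by (rule sum.cong) (use a m in \<open>auto simp: mp_eval_power\<close>)
      also have "\<dots> = sum \<beta> ({..<l} \<inter> C)" by (simp add: sum.inter_restrict)
      also have "{..<l} \<inter> C = C" using Cl by blast
      finally show "a ^ m \<in> JJ l \<beta> u" using C(3) by (simp add: JJ_def)
    qed
    then obtain N where N: "\<forall>m\<ge>N. b * a ^ m \<in> JJ l \<beta> u"
      using M unfolding mathieu_subspace_def by blast
    define m where "m = max N 1"
    have "b * a ^ m \<in> JJ l \<beta> u" using N by (simp add: m_def)
    moreover have "(\<Sum>i<l. \<beta> i * mp_eval (b * a ^ m) (u i)) = (\<Sum>i<l. if i = j then \<beta> j else 0)"
      by (rule sum.cong) (use a b j m_def in \<open>auto simp: mp_eval_power mp_eval_mult\<close>)
    moreover have "\<dots> \<noteq> 0" using jl by simp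
    ultimately show False by (simp add: JJ_def)
  qed
qed

lemma colon_JJ: "colon (N_Balpha l \<alpha> u) g = JJ l (alpha_fB l \<alpha> u g) u"
  unfolding colon_def N_Balpha_def JJ_def alpha_fB_def
  by (auto intro!: sum.cong simp: mp_eval_mult mult_ac)

theorem proposition6p3:
  fixes l :: nat
    and u :: "nat \<Rightarrow> ('n::finite \<Rightarrow> 'a::field)"
    and \<alpha> :: "nat \<Rightarrow> 'a"
  assumes "l \<ge> 1"
    and "inj_on u {..<l}"
  shows "sigma_set (N_Balpha l \<alpha> u) = {f. card (supp_vec l (alpha_fB l \<alpha> u f)) \<le> 1}
     \<and> tau_set (N_Balpha l \<alpha> u) = {f. alpha_fB l \<alpha> u f \<in> Omega l}"
  unfolding sigma_set_def tau_set_def colon_JJ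
  using JJ_ideal[OF assms(2)] JJ_mathieu[OF assms(2)] by auto

end
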